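(* Let $c>0$ and let $A$ be the integral operator on functions on $[-1,1]$ defined by $$(Af)(y)=\int_{-1}^{1}K(y-x)\,f(x)\,\mathrm{d}x,\qquad -1\le y\le 1,\qquad K(x)=\frac{\sin^2(cx)}{\pi c x^2}.$$ Then: (i) Setting $l=\inf_{x\in[-1,1]}\int_{-1}^{1}K(x-y)\,\mathrm{d}y$, one has $l>0$, and for every nonnegative $f\in L^1(-1,1)$, $$\|Af\|_{L^1(-1,1)}\ \ge\ l\,\|f\|_{L^1(-1,1)} .$$ Consequently $A^{-1}$, restricted to the image under $A$ of the cone of nonnegative functions in $L^1(-1,1)$, is continuous with respect to the $L^1(-1,1)$ norm. (ii) For every $p>1$, the nonnegative functions $$f_n(x)=\left(\frac{np+1}{2}\right)^{1/p}(1-|x|)^n,\qquad x\in[-1,1],\ n=1,2,\dots,$$ satisfy $\|f_n\|_{L^p(-1,1)}=1$ for all $n$, $\sup_{x\in[-1,1]}|f_n(x)|\to\infty$, and $\|Af_n\|_{L^p(-1,1)}\to 0$ as $n\to\infty$. Hence the positivity constraint does not restore continuity of $A^{-1}$ in the $L^p(-1,1)$ norm for any $p>1$.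
   Context: $A$ is the imaging operator for a one-dimensional object of support $[-1,1]$ illuminated by spatially incoherent light and imaged by an aberration-free instrument with rectangular aperture; $c=\pi/R$ with $R$ the Rayleigh resolution distance. Norms are the usual $L^p$ norms on the interval $[-1,1]$. *)

theory Defs
  imports "HOL-Analysis.Analysis"
begin

text \<open>Imaging kernel K(x) = sin(cx)^2 / (pi c x^2), extended continuously by c/pi at x = 0.\<close>
definition imgK :: "real \<Rightarrow> real \<Rightarrow> real" where
  "imgK c x = (if x = 0 then c / pi else (sin (c * x))\<^sup>2 / (pi * c * x\<^sup>2))"

definition imgA :: "real \<Rightarrow> (real \<Rightarrow> real) \<Rightarrow> real \<Rightarrow> real" where
  "imgA c f y = (LINT x:{-1..1}|lborel. imgK c (y - x) * f x)"

definition Lp_norm :: "real \<Rightarrow> (real \<Rightarrow> real) \<Rightarrow> real" where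
  "Lp_norm p g = (LINT x:{-1..1}|lborel. \<bar>g x\<bar> powr p) powr (1 / p)"

definition L1_norm :: "(real \<Rightarrow> real) \<Rightarrow> real" where
  "L1_norm g = (LINT x:{-1..1}|lborel. \<bar>g x\<bar>)"

definition imgl :: "real \<Rightarrow> real" where
  "imgl c = (INF x\<in>{-1..1}. (LINT y:{-1..1}|lborel. imgK c (x - y)))"

definition fseq :: "real \<Rightarrow> nat \<Rightarrow> real \<Rightarrow> real" where
  "fseq p n x = ((real n * p + 1) / 2) powr (1 / p) * (1 - \<bar>x\<bar>) ^ n"

end

theory Submission
  imports Defs "HOL-Real_Asymp.Real_Asymp"
begin

lemma imgK_meas[measurable]: "imgK c \<in> borel_measurable borel"
  unfolding imgK_def[abs_def] by measurable

lemma imgK_nonneg: "c > 0 \<Longrightarrow> imgK c x \<ge> 0"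
  by (simp add: imgK_def)

lemma imgK_even: "imgK c (-x) = imgK c x"
  by (simp add: imgK_def)

lemma imgK_le: assumes "c > 0" shows "imgK c x \<le> c / pi"
proof (cases "x = 0")
  case False
  have "(sin (c*x))\<^sup>2 \<le> (c*x)\<^sup>2"
    using abs_sin_x_le_abs_x[of "c*x"] by (metis abs_ge_zero power2_abs power_mono)
  hence "(sin (c * x))\<^sup>2 / (pi * c * x\<^sup>2) \<le> (c*x)\<^sup>2 / (pi * c * x\<^sup>2)"
    using False assms by (intro divide_right_mono) auto
  also have "\<dots> = c / pi" using False assms by (simp add: power2_eq_square field_simps)
  finally show ?thesis using False by (simp add: imgK_def)
qed (simp add: imgK_def)

lemma sin_lower: fixes t :: real assumes "\<bar>t\<bar> \<le> 1" shows "\<bar>sin t\<bar> \<ge> \<bar>t\<bar> / 2"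
proof -
  have "\<bar>sin t - (\<Sum>m<3. sin_coeff m * t ^ m)\<bar> \<le> inverse (fact 3) * \<bar>t\<bar> ^ 3"
    by (rule Maclaurin_sin_bound)
  hence "\<bar>sin t - t\<bar> \<le> \<bar>t\<bar>^3 / 6"
    by (simp add: sin_coeff_def lessThan_nat_numeral fact_numeral)
  moreover have "\<bar>t\<bar>^3 \<le> \<bar>t\<bar>^1" using assms
    by (intro power_decreasing) auto
  moreover have "\<bar>t\<bar> - \<bar>sin t\<bar> \<le> \<bar>t - sin t\<bar>" by (rule abs_triangle_ineq2)
  moreover have "\<bar>t - sin t\<bar> = \<bar>sin t - t\<bar>" by (rule abs_minus_commute)
  ultimately show ?thesis using abs_ge_zero[of t] unfolding power_one_right by linarith
qed

lemma imgK_lower: assumes "c > 0" "\<bar>x\<bar> \<le> 1 / c" shows "imgK c x \<ge> c / (4 * pi)"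
proof (cases "x = 0")
  case True
  have "c / (4 * pi) \<le> c / pi" using assms by (intro divide_left_mono) auto
  thus ?thesis using True by (simp add: imgK_def)
next
  case False
  have a: "\<bar>c*x\<bar> \<le> 1" using assms by (simp add: abs_mult field_simps)
  have "\<bar>c*x\<bar>/2 \<le> \<bar>sin (c*x)\<bar>" by (rule sin_lower[OF a])
  hence "(\<bar>c*x\<bar>/2)\<^sup>2 \<le> (sin (c*x))\<^sup>2" by (metis abs_ge_zero power2_abs power_mono zero_le_divide_iff zero_le_numeral)
  hence "(\<bar>c*x\<bar>/2)\<^sup>2 / (pi * c * x\<^sup>2) \<le> (sin (c*x))\<^sup>2 / (pi * c * x\<^sup>2)"
    using False assms by (intro divide_right_mono) auto
  moreover have "(\<bar>c*x\<bar>/2)\<^sup>2 / (pi * c * x\<^sup>2) = c / (4*pi)" using False assms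
    by (simp add: power2_eq_square field_simps abs_mult)
  ultimately show ?thesis using False by (simp add: imgK_def)
qed


lemma bnd_int:
  fixes g :: "real \<Rightarrow> real"
  assumes "g \<in> borel_measurable lborel" "\<And>x. x \<in> {a..b} \<Longrightarrow> \<bar>g x\<bar> \<le> B"
  shows "set_integrable lborel {a..b} g"
  unfolding set_integrable_def
  by (rule integrableI_bounded_set_indicator[where B=B]) (use assms in \<open>auto simp: emeasure_lborel_Icc_eq\<close>)

lemma A_eq: "imgA c f y = (\<integral>x. imgK c (y - x) * (indicator {-1..1} x * f x) \<partial>lborel)"
  unfolding imgA_def set_lebesgue_integral_def by (intro Bochner_Integration.integral_cong) auto

lemma A_meas:
  assumes "set_integrable lborel {-1..1} f"
  shows "imgA c f \<in> borel_measurable lborel"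
proof -
  define h where "h x = indicator {-1..1} x * f x" for x :: real
  have [measurable]: "h \<in> borel_measurable lborel"
    using assms unfolding set_integrable_def h_def by (simp add: borel_measurable_integrable)
  have "(\<lambda>y. \<integral>x. imgK c (y - x) * h x \<partial>lborel) \<in> borel_measurable lborel"
    by (rule lborel.borel_measurable_lebesgue_integral) measurable
  thus ?thesis unfolding A_eq h_def .
qed

lemma int_K:
  assumes "c > 0" "set_integrable lborel {-1..1} f"
  shows "integrable lborel (\<lambda>x. imgK c (y - x) * (indicator {-1..1} x * f x))"
proof -
  define h where "h x = indicator {-1..1} x * f x" for x :: real
  have hi: "integrable lborel h" using assms unfolding set_integrable_def h_def by simp
  have [measurable]: "h \<in> borel_measurable lborel" using hi by (simp add: borel_measurable_integrable)
  have "integrable lborel (\<lambda>x. imgK c (y - x) * h x)"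
  proof (rule Bochner_Integration.integrable_bound[where f="\<lambda>x. (c/pi) * h x"])
    show "integrable lborel (\<lambda>x. (c/pi) * h x)" using hi by simp
    show "(\<lambda>x. imgK c (y - x) * h x) \<in> borel_measurable lborel" by measurable
    show "AE x in lborel. norm (imgK c (y - x) * h x) \<le> norm (c / pi * h x)"
    proof (rule AE_I2)
      fix x
      have "imgK c (y - x) * \<bar>h x\<bar> \<le> c / pi * \<bar>h x\<bar>"
        using imgK_le[OF assms(1)] by (intro mult_right_mono) auto
      thus "norm (imgK c (y - x) * h x) \<le> norm (c / pi * h x)"
        using imgK_nonneg[OF assms(1), of "y-x"] assms(1) by (simp add: abs_mult)
    qed
  qed
  thus ?thesis unfolding h_def .
qed

lemma A_bound:
  assumes "c > 0" "set_integrable lborel {-1..1} f"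
  shows "\<bar>imgA c f y\<bar> \<le> c / pi * L1_norm f"
proof -
  have hi: "integrable lborel (\<lambda>x. indicator {-1..1} x * f x)" using assms unfolding set_integrable_def by simp
  have "\<bar>imgA c f y\<bar> \<le> (\<integral>x. norm (imgK c (y - x) * (indicator {-1..1} x * f x)) \<partial>lborel)"
    unfolding A_eq using integral_norm_bound by (metis real_norm_def)
  also have "\<dots> \<le> (\<integral>x. c / pi * \<bar>indicator {-1..1} x * f x\<bar> \<partial>lborel)"
  proof (rule integral_mono)
    show "integrable lborel (\<lambda>x. norm (imgK c (y - x) * (indicator {-1..1} x * f x)))"
      using int_K[OF assms] by (rule integrable_norm)
    show "integrable lborel (\<lambda>x. c / pi * \<bar>indicator {-1..1} x * f x\<bar>)"
      using hi by (intro integrable_mult_right integrable_abs)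
    fix x
    show "norm (imgK c (y - x) * (indicator {-1..1} x * f x)) \<le> c / pi * \<bar>indicator {-1..1} x * f x\<bar>"
    proof -
      have "imgK c (y - x) * \<bar>indicator {-1..1} x * f x\<bar> \<le> c / pi * \<bar>indicator {-1..1} x * f x\<bar>"
        using imgK_le[OF assms(1), of "y-x"] by (intro mult_right_mono) auto
      thus ?thesis using imgK_nonneg[OF assms(1), of "y-x"] by (simp only: real_norm_def abs_mult[of "imgK c (y - x)"] abs_of_nonneg)
    qed
  qed
  also have "\<dots> = c / pi * L1_norm f"
    unfolding L1_norm_def set_lebesgue_integral_def by (simp add: abs_mult)
  finally show ?thesis .
qed

lemma A_nonneg:
  assumes "c > 0" "AE x in lborel. x \<in> {-1..1} \<longrightarrow> f x \<ge> 0"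
  shows "imgA c f y \<ge> 0"
  unfolding A_eq using assms imgK_nonneg[OF assms(1)]
  by (intro integral_nonneg_AE) (auto simp: indicator_def)


lemma G_int: "c > 0 \<Longrightarrow> set_integrable lborel {-1..1} (\<lambda>y. imgK c (x - y))"
  by (rule bnd_int[where B="c/pi"]) (use imgK_le imgK_nonneg in auto)

lemma G_nonneg: "c > 0 \<Longrightarrow> (LINT y:{-1..1}|lborel. imgK c (x - y)) \<ge> 0"
  unfolding set_lebesgue_integral_def using imgK_nonneg
  by (intro Bochner_Integration.integral_nonneg) (simp add: indicator_def)

lemma G_lower:
  assumes "c > 0" "x \<in> {-1..1}"
  shows "(LINT y:{-1..1}|lborel. imgK c (x - y)) \<ge> c / (4 * pi) * min 1 (1 / c)"
proof -
  define d where "d = min 1 (1 / c)"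
  define m where "m = c / (4 * pi)"
  have d: "0 < d" "d \<le> 1" "d \<le> 1 / c" using assms by (auto simp: d_def)
  define J where "J = (if x \<ge> 0 then {x - d..x} else {x..x + d})"
  have J: "J \<subseteq> {-1..1}" using assms d by (auto simp: J_def)
  have Jk: "imgK c (x - y) \<ge> m" if "y \<in> J" for y
    using imgK_lower[OF assms(1), of "x - y"] that d unfolding m_def
    by (cases "x \<ge> 0") (auto simp: J_def abs_if split: if_splits)
  have mJ: "measure lborel J = d" using d by (auto simp: J_def)
  have "m * d = (\<integral>y. m * indicator J y \<partial>lborel)"
    using mJ by (simp add: J_def)
  also have "\<dots> \<le> (\<integral>y. indicator {-1..1} y *\<^sub>R imgK c (x - y) \<partial>lborel)"
  proof (rule integral_mono)
    show "integrable lborel (\<lambda>y. m * indicator J y)"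
      by (intro integrable_mult_right integrable_real_indicator) (auto simp: J_def emeasure_lborel_Icc_eq)
    show "integrable lborel (\<lambda>y. indicator {-1..1} y *\<^sub>R imgK c (x - y))"
      using G_int[OF assms(1)] unfolding set_integrable_def .
    fix y
    show "m * indicator J y \<le> indicator {-1..1} y *\<^sub>R imgK c (x - y)"
      using Jk[of y] J imgK_nonneg[OF assms(1), of "x - y"] by (auto simp: indicator_def)
  qed
  finally show ?thesis unfolding set_lebesgue_integral_def m_def d_def .
qed

lemma imgl_pos: "c > 0 \<Longrightarrow> imgl c > 0"
proof -
  assume c: "c > 0"
  have "c / (4 * pi) * min 1 (1 / c) \<le> imgl c"
    unfolding imgl_def by (rule cINF_greatest) (use G_lower[OF c] in auto)
  moreover have "c / (4 * pi) * min 1 (1 / c) > 0" using c by auto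
  ultimately show ?thesis by linarith
qed

lemma imgl_le: "c > 0 \<Longrightarrow> x \<in> {-1..1} \<Longrightarrow> imgl c \<le> (LINT y:{-1..1}|lborel. imgK c (x - y))"
  unfolding imgl_def by (rule cINF_lower) (auto intro!: bdd_belowI[where m=0] G_nonneg)


lemma imgK_swap: "imgK c (y - x) = imgK c (x - y)"
  using imgK_even[of c "x - y"] by simp

lemma part1:
  assumes c: "c > 0" and fi: "set_integrable lborel {-1..1} f"
    and fnn: "AE x in lborel. x \<in> {-1..1} \<longrightarrow> f x \<ge> 0"
  shows "L1_norm (imgA c f) \<ge> imgl c * L1_norm f"
proof -
  define h where "h x = indicator {-1..1} x * f x" for x :: real
  have hi: "integrable lborel h" using fi unfolding set_integrable_def h_def by simp
  have [measurable]: "h \<in> borel_measurable lborel" using hi by (simp add: borel_measurable_integrable)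
  have hnn: "AE x in lborel. h x \<ge> 0" using fnn by eventually_elim (auto simp: h_def indicator_def)
  define G where "G x = (LINT y:{-1..1}|lborel. imgK c (x - y))" for x
  define F where "F x y = indicator {-1..1} y * (imgK c (y - x) * h x)" for x y :: real
  have Fm[measurable]: "(\<lambda>(x, y). F x y) \<in> borel_measurable (lborel \<Otimes>\<^sub>M lborel)"
    unfolding F_def by measurable
  have Fy: "(\<integral>y. F x y \<partial>lborel) = h x * G x" for x
  proof -
    have "(\<integral>y. F x y \<partial>lborel) = h x * (\<integral>y. indicator {-1..1} y * imgK c (x - y) \<partial>lborel)"
    proof -
      have "F x y = h x * (indicator {-1..1} y * imgK c (x - y))" for y
        unfolding F_def imgK_swap[of c y x] by simp
      thus ?thesis by simp
    qed
    thus ?thesis unfolding G_def set_lebesgue_integral_def by simp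
  qed
  have Fint: "integrable (lborel \<Otimes>\<^sub>M lborel) (\<lambda>(x, y). F x y)"
  proof (rule lborel_pair.Fubini_integrable)
    show "AE x in lborel. integrable lborel (\<lambda>y. case (x, y) of (x, y) \<Rightarrow> F x y)"
    proof (rule AE_I2)
      fix x
      have "integrable lborel (\<lambda>y. h x * (indicator {-1..1} y * imgK c (x - y)))"
        using G_int[OF c, of x] unfolding set_integrable_def
        by (intro integrable_mult_right) simp
      moreover have "F x y = h x * (indicator {-1..1} y * imgK c (x - y))" for y
        unfolding F_def imgK_swap[of c y x] by simp
      ultimately show "integrable lborel (\<lambda>y. case (x, y) of (x, y) \<Rightarrow> F x y)"
        by simp
    qed
    show "integrable lborel (\<lambda>x. \<integral>y. norm (case (x, y) of (x, y) \<Rightarrow> F x y) \<partial>lborel)"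
    proof (rule Bochner_Integration.integrable_bound[where f="\<lambda>x. 2 * (c / pi) * \<bar>h x\<bar>"])
      show "integrable lborel (\<lambda>x. 2 * (c / pi) * \<bar>h x\<bar>)" using hi by simp
      show "(\<lambda>x. \<integral>y. norm (case (x, y) of (x, y) \<Rightarrow> F x y) \<partial>lborel) \<in> borel_measurable lborel"
        unfolding F_def by measurable
      show "AE x in lborel. norm (\<integral>y. norm (case (x, y) of (x, y) \<Rightarrow> F x y) \<partial>lborel) \<le> norm (2 * (c / pi) * \<bar>h x\<bar>)"
      proof (rule AE_I2)
        fix x
        have eq: "(\<integral>y. norm (case (x, y) of (x, y) \<Rightarrow> F x y) \<partial>lborel)
            = \<bar>h x\<bar> * (\<integral>y. indicator {-1..1} y * imgK c (y - x) \<partial>lborel)"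
        proof -
          have "norm (case (x, y) of (x, y) \<Rightarrow> F x y) = \<bar>h x\<bar> * (indicator {-1..1} y * imgK c (y - x))" for y
            unfolding F_def using imgK_nonneg[OF c, of "y - x"] by (simp add: abs_mult)
          thus ?thesis by simp
        qed
        have "(\<integral>y. indicator {-1..1} y * imgK c (y - x) \<partial>lborel) \<le> (\<integral>y. indicator {-1..1} (y::real) * (c / pi) \<partial>lborel)"
        proof (rule integral_mono)
          show "integrable lborel (\<lambda>y. indicator {-1..1} y * imgK c (y - x))"
            unfolding imgK_swap[of c _ x] using G_int[OF c, of x] unfolding set_integrable_def by simp
          show "integrable lborel (\<lambda>y. indicator {-1..1} (y::real) * (c / pi))"
            by (intro integrable_mult_left integrable_real_indicator) (auto simp: emeasure_lborel_Icc_eq)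
          fix y :: real show "indicator {-1..1} y * imgK c (y - x) \<le> indicator {-1..1} y * (c / pi)"
            using imgK_le[OF c] by (auto simp: indicator_def)
        qed
        also have "\<dots> = 2 * (c / pi)" by simp
        finally have le: "(\<integral>y. indicator {-1..1} y * imgK c (y - x) \<partial>lborel) \<le> 2 * (c / pi)" .
        have nn: "(\<integral>y. indicator {-1..1} y * imgK c (y - x) \<partial>lborel) \<ge> 0"
          using imgK_nonneg[OF c] by (intro Bochner_Integration.integral_nonneg) (simp add: indicator_def)
        show "norm (\<integral>y. norm (case (x, y) of (x, y) \<Rightarrow> F x y) \<partial>lborel) \<le> norm (2 * (c / pi) * \<bar>h x\<bar>)"
        proof -
          have "\<bar>h x\<bar> * (\<integral>y. indicator {-1..1} y * imgK c (y - x) \<partial>lborel) \<le> \<bar>h x\<bar> * (2 * (c / pi))"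
            using le by (rule mult_left_mono) simp
          thus ?thesis unfolding eq using nn c by (simp add: abs_mult mult_ac)
        qed
      qed
    qed
  qed (fact Fm)
  have "imgl c * L1_norm f = (\<integral>x. h x * imgl c \<partial>lborel)"
  proof -
    have "L1_norm f = (\<integral>x. h x \<partial>lborel)"
    proof -
      have "L1_norm f = (\<integral>x. \<bar>h x\<bar> \<partial>lborel)"
        unfolding L1_norm_def set_lebesgue_integral_def h_def by (simp add: abs_mult)
      also have "\<dots> = (\<integral>x. h x \<partial>lborel)"
        by (rule integral_cong_AE) (use hnn in auto)
      finally show ?thesis .
    qed
    thus ?thesis by simp
  qed
  also have "\<dots> \<le> (\<integral>x. h x * G x \<partial>lborel)"
  proof (rule integral_mono_AE)
    show "integrable lborel (\<lambda>x. h x * imgl c)" using hi by simp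
    show "integrable lborel (\<lambda>x. h x * G x)"
      using lborel_pair.integrable_fst[OF Fint] unfolding Fy .
    show "AE x in lborel. h x * imgl c \<le> h x * G x"
      using hnn
    proof eventually_elim
      case (elim x)
      show ?case
      proof (cases "x \<in> {-1..1}")
        case True
        thus ?thesis using imgl_le[OF c True] elim by (simp add: G_def mult_left_mono)
      qed (simp add: h_def)
    qed
  qed
  also have "\<dots> = (\<integral>x. \<integral>y. F x y \<partial>lborel \<partial>lborel)" unfolding Fy ..
  also have "\<dots> = (\<integral>y. \<integral>x. F x y \<partial>lborel \<partial>lborel)"
    using lborel_pair.Fubini_integral[OF Fint] by simp
  also have "\<dots> = (\<integral>y. indicator {-1..1} y * imgA c f y \<partial>lborel)"
    unfolding F_def A_eq h_def by simp
  also have "\<dots> = L1_norm (imgA c f)"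
    unfolding L1_norm_def set_lebesgue_integral_def using A_nonneg[OF c fnn] by simp
  finally show ?thesis .
qed

lemma pow_int:
  fixes a :: real assumes a: "a > 0"
  shows "((\<lambda>x. (1 - \<bar>x\<bar>) powr a) has_integral (2 / (a + 1))) {-1..1}"
proof -
  have r: "((\<lambda>x. (1 - \<bar>x\<bar>) powr a) has_integral
      ((\<lambda>x. - ((1 - x) powr (a + 1)) / (a + 1)) 1 - (\<lambda>x. - ((1 - x) powr (a + 1)) / (a + 1)) 0)) {0..1}"
  proof (rule fundamental_theorem_of_calculus_interior)
    show "continuous_on {0..1} (\<lambda>x::real. - ((1 - x) powr (a + 1)) / (a + 1))"
      using a by (intro continuous_intros continuous_on_powr') auto
    fix x :: real assume x: "x \<in> {0<..<1}"
    have "((\<lambda>x. (1 - x) powr (a + 1)) has_real_derivative ((a + 1) * (1 - x) powr (a + 1 - of_nat 1) * (-1))) (at x)"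
      by (rule DERIV_fun_powr) (use x in \<open>auto intro!: derivative_eq_intros\<close>)
    hence "((\<lambda>x. - ((1 - x) powr (a + 1)) / (a + 1)) has_real_derivative (1 - \<bar>x\<bar>) powr a) (at x)"
      using x a by (auto intro!: derivative_eq_intros)
    thus "((\<lambda>x. - ((1 - x) powr (a + 1)) / (a + 1)) has_vector_derivative (1 - \<bar>x\<bar>) powr a) (at x)"
      by (simp add: has_real_derivative_iff_has_vector_derivative)
  qed simp
  have l: "((\<lambda>x. (1 - \<bar>x\<bar>) powr a) has_integral
      ((\<lambda>x. ((1 + x) powr (a + 1)) / (a + 1)) 0 - (\<lambda>x. ((1 + x) powr (a + 1)) / (a + 1)) (-1))) {-1..0}"
  proof (rule fundamental_theorem_of_calculus_interior)
    show "continuous_on {-1..0} (\<lambda>x::real. ((1 + x) powr (a + 1)) / (a + 1))"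
      using a by (intro continuous_intros continuous_on_powr') auto
    fix x :: real assume x: "x \<in> {-1<..<0}"
    have "((\<lambda>x. (1 + x) powr (a + 1)) has_real_derivative ((a + 1) * (1 + x) powr (a + 1 - of_nat 1) * 1)) (at x)"
      by (rule DERIV_fun_powr) (use x in \<open>auto intro!: derivative_eq_intros\<close>)
    hence "((\<lambda>x. ((1 + x) powr (a + 1)) / (a + 1)) has_real_derivative (1 - \<bar>x\<bar>) powr a) (at x)"
      using x a by (auto intro!: derivative_eq_intros)
    thus "((\<lambda>x. ((1 + x) powr (a + 1)) / (a + 1)) has_vector_derivative (1 - \<bar>x\<bar>) powr a) (at x)"
      by (simp add: has_real_derivative_iff_has_vector_derivative)
  qed simp
  have "((\<lambda>x. (1 - \<bar>x\<bar>) powr a) has_integral (1 / (a + 1) + 1 / (a + 1))) {-1..1}"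
    using has_integral_combine[of "-1" 0 1, OF _ _ l r] a by simp
  thus ?thesis by (simp add: field_simps)
qed


lemma fseq_meas[measurable]: "fseq p n \<in> borel_measurable borel"
  unfolding fseq_def[abs_def] by measurable

lemma fseq_nonneg: "x \<in> {-1..1} \<Longrightarrow> fseq p n x \<ge> 0"
  unfolding fseq_def by auto

lemma fseq_le: "x \<in> {-1..1} \<Longrightarrow> \<bar>fseq p n x\<bar> \<le> ((real n * p + 1) / 2) powr (1 / p)"
proof -
  assume x: "x \<in> {-1..1}"
  have "(1 - \<bar>x\<bar>) ^ n \<le> 1" using x by (intro power_le_one) auto
  hence "((real n * p + 1) / 2) powr (1 / p) * (1 - \<bar>x\<bar>) ^ n \<le> ((real n * p + 1) / 2) powr (1 / p) * 1"
    by (intro mult_left_mono) auto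
  thus ?thesis using fseq_nonneg[OF x] by (simp add: fseq_def)
qed

lemma fseq_int: "set_integrable lborel {-1..1} (fseq p n)"
  by (rule bnd_int[OF _ fseq_le]) measurable

lemma pow_eq: assumes "t \<ge> 0" "n \<ge> 1" shows "t ^ n = t powr (real n)"
proof (cases "t = 0")
  case True thus ?thesis using assms by simp
next
  case False thus ?thesis using assms by (simp add: powr_realpow)
qed

lemma L1_fseq:
  assumes p: "p > 1" and n: "n \<ge> 1"
  shows "L1_norm (fseq p n) = ((real n * p + 1) / 2) powr (1 / p) * (2 / (real n + 1))"
proof -
  define C where "C = ((real n * p + 1) / 2) powr (1 / p)"
  have si: "set_integrable lborel {-1..1} (\<lambda>x. \<bar>fseq p n x\<bar>)"
  proof (rule bnd_int[where B="((real n * p + 1) / 2) powr (1 / p)"])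
    show "(\<lambda>x. \<bar>fseq p n x\<bar>) \<in> borel_measurable lborel" by measurable
  qed (use fseq_le in auto)
  have "L1_norm (fseq p n) = integral {-1..1} (\<lambda>x. \<bar>fseq p n x\<bar>)"
    unfolding L1_norm_def by (rule set_borel_integral_eq_integral(2)[OF si])
  also have "\<dots> = integral {-1..1} (\<lambda>x. C * (1 - \<bar>x\<bar>) powr (real n))"
    using n by (intro integral_cong) (auto simp: fseq_def C_def pow_eq)
  also have "\<dots> = C * (2 / (real n + 1))"
    using integral_unique[OF pow_int[of "real n"]] n by simp
  finally show ?thesis unfolding C_def .
qed

lemma Lp_fseq:
  assumes p: "p > 1" and n: "n \<ge> 1"
  shows "Lp_norm p (fseq p n) = 1"
proof -
  define C where "C = ((real n * p + 1) / 2) powr (1 / p)"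
  have "real n * p \<ge> 0" using p by simp
  hence np: "real n * p + 1 > 0" by linarith
  have C: "C > 0" using np by (simp add: C_def)
  have CP: "C powr p = (real n * p + 1) / 2" unfolding C_def using p np
    by (simp add: powr_powr)
  have si: "set_integrable lborel {-1..1} (\<lambda>x. \<bar>fseq p n x\<bar> powr p)"
  proof (rule bnd_int[where B="C powr p"])
    show "(\<lambda>x. \<bar>fseq p n x\<bar> powr p) \<in> borel_measurable lborel" by measurable
    fix x :: real assume x: "x \<in> {-1..1}"
    show "\<bar>\<bar>fseq p n x\<bar> powr p\<bar> \<le> C powr p"
      using fseq_le[OF x, of p n] p unfolding C_def by (simp add: powr_mono2)
  qed
  have eq: "\<bar>fseq p n x\<bar> powr p = (real n * p + 1) / 2 * (1 - \<bar>x\<bar>) powr (real n * p)"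
    if x: "x \<in> {-1..1}" for x
  proof -
    have t: "1 - \<bar>x\<bar> \<ge> 0" using x by auto
    have "\<bar>fseq p n x\<bar> powr p = (C * (1 - \<bar>x\<bar>) powr real n) powr p"
      using fseq_nonneg[OF x] t n by (simp add: fseq_def C_def pow_eq)
    also have "\<dots> = C powr p * (1 - \<bar>x\<bar>) powr (real n * p)"
      using C t by (simp add: powr_mult powr_powr)
    finally show ?thesis unfolding CP .
  qed
  have "(LINT x:{-1..1}|lborel. \<bar>fseq p n x\<bar> powr p) = integral {-1..1} (\<lambda>x. \<bar>fseq p n x\<bar> powr p)"
    by (rule set_borel_integral_eq_integral(2)[OF si])
  also have "\<dots> = integral {-1..1} (\<lambda>x. (real n * p + 1) / 2 * (1 - \<bar>x\<bar>) powr (real n * p))"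
    using eq by (intro integral_cong) auto
  also have "\<dots> = (real n * p + 1) / 2 * (2 / (real n * p + 1))"
    using integral_unique[OF pow_int[of "real n * p"]] n p by simp
  also have "\<dots> = 1" using np by (simp add: field_simps)
  finally show ?thesis unfolding Lp_norm_def by simp
qed

lemma sup_fseq:
  assumes p: "p > 1"
  shows "filterlim (\<lambda>n. SUP x\<in>{-1..1}. \<bar>fseq p n x\<bar>) at_top sequentially"
proof (rule filterlim_at_top_mono)
  show "filterlim (\<lambda>n::nat. ((real n * p + 1) / 2) powr (1 / p)) at_top sequentially"
    using p by real_asymp
  show "\<forall>\<^sub>F n in sequentially. ((real n * p + 1) / 2) powr (1 / p) \<le> (SUP x\<in>{-1..1}. \<bar>fseq p n x\<bar>)"
  proof (rule always_eventually, rule allI)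
    fix n
    have "((real n * p + 1) / 2) powr (1 / p) = \<bar>fseq p n 0\<bar>" by (simp add: fseq_def)
    also have "\<dots> \<le> (SUP x\<in>{-1..1}. \<bar>fseq p n x\<bar>)"
      by (rule cSUP_upper) (auto intro!: bdd_aboveI2[where M="((real n * p + 1) / 2) powr (1 / p)"] fseq_le)
    finally show "((real n * p + 1) / 2) powr (1 / p) \<le> (SUP x\<in>{-1..1}. \<bar>fseq p n x\<bar>)" .
  qed
qed

lemma Af_int:
  assumes c: "c > 0" and p: "p > 1" and fi: "set_integrable lborel {-1..1} f"
  shows "set_integrable lborel {-1..1} (\<lambda>y. \<bar>imgA c f y\<bar> powr p)"
proof (rule bnd_int[where B="(c / pi * L1_norm f) powr p"])
  have [measurable]: "imgA c f \<in> borel_measurable lborel" by (rule A_meas[OF fi])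
  show "(\<lambda>y. \<bar>imgA c f y\<bar> powr p) \<in> borel_measurable lborel" by measurable
  fix y :: real
  show "\<bar>\<bar>imgA c f y\<bar> powr p\<bar> \<le> (c / pi * L1_norm f) powr p"
    using A_bound[OF c fi, of y] p by (simp add: powr_mono2)
qed

lemma Lp_A_bound:
  assumes c: "c > 0" and p: "p > 1" and fi: "set_integrable lborel {-1..1} f"
  shows "Lp_norm p (imgA c f) \<le> 2 powr (1 / p) * (c / pi * L1_norm f)"
proof -
  define B where "B = c / pi * L1_norm f"
  have B: "B \<ge> 0" unfolding B_def L1_norm_def set_lebesgue_integral_def using c
    by (auto intro!: Bochner_Integration.integral_nonneg)
  have "(LINT y:{-1..1}|lborel. \<bar>imgA c f y\<bar> powr p) \<le> (LINT y:{-1..1}|lborel. (\<lambda>y::real. B powr p) y)"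
    unfolding set_lebesgue_integral_def
  proof (rule Bochner_Integration.integral_mono)
    show "integrable lborel (\<lambda>y. indicator {-1..1} y *\<^sub>R \<bar>imgA c f y\<bar> powr p)"
      using Af_int[OF assms] unfolding set_integrable_def .
    show "integrable lborel (\<lambda>y. indicator {-1..1} (y::real) *\<^sub>R B powr p)"
      by (simp add: emeasure_lborel_Icc_eq)
    fix y :: real
    show "indicator {-1..1} y *\<^sub>R \<bar>imgA c f y\<bar> powr p \<le> indicator {-1..1} y *\<^sub>R B powr p"
      using A_bound[OF c fi, of y] p unfolding B_def by (auto simp: indicator_def intro!: powr_mono2)
  qed
  also have "\<dots> = 2 * B powr p" by (simp add: set_lebesgue_integral_def)
  finally have le: "(LINT y:{-1..1}|lborel. \<bar>imgA c f y\<bar> powr p) \<le> 2 * B powr p" .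
  have nn: "(LINT y:{-1..1}|lborel. \<bar>imgA c f y\<bar> powr p) \<ge> 0"
    unfolding set_lebesgue_integral_def by (auto intro!: Bochner_Integration.integral_nonneg)
  have "Lp_norm p (imgA c f) \<le> (2 * B powr p) powr (1 / p)"
    unfolding Lp_norm_def using le nn p by (intro powr_mono2) auto
  also have "\<dots> = 2 powr (1 / p) * B"
    using B p by (simp add: powr_mult powr_powr)
  finally show ?thesis unfolding B_def .
qed


theorem mainTheorem1:
  fixes c :: real
  assumes "c > 0"
  shows "imgl c > 0
    \<and> (\<forall>f :: real \<Rightarrow> real. set_integrable lborel {-1..1} f
          \<and> (AE x in lborel. x \<in> {-1..1} \<longrightarrow> f x \<ge> 0)
          \<longrightarrow> L1_norm (imgA c f) \<ge> imgl c * L1_norm f)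
    \<and> (\<forall>p :: real. p > 1 \<longrightarrow>
          (\<forall>n :: nat. n \<ge> 1 \<longrightarrow> Lp_norm p (fseq p n) = 1)
        \<and> filterlim (\<lambda>n. SUP x\<in>{-1..1}. \<bar>fseq p n x\<bar>) at_top sequentially
        \<and> (\<forall>n :: nat. set_integrable lborel {-1..1} (\<lambda>y. \<bar>imgA c (fseq p n) y\<bar> powr p))
        \<and> ((\<lambda>n. Lp_norm p (imgA c (fseq p n))) \<longlonglongrightarrow> 0))"
proof -
  have part2: "(\<forall>n :: nat. n \<ge> 1 \<longrightarrow> Lp_norm p (fseq p n) = 1)
        \<and> filterlim (\<lambda>n. SUP x\<in>{-1..1}. \<bar>fseq p n x\<bar>) at_top sequentially
        \<and> (\<forall>n :: nat. set_integrable lborel {-1..1} (\<lambda>y. \<bar>imgA c (fseq p n) y\<bar> powr p))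
        \<and> ((\<lambda>n. Lp_norm p (imgA c (fseq p n))) \<longlonglongrightarrow> 0)" if p: "p > 1" for p
  proof (intro conjI allI impI)
    show "Lp_norm p (fseq p n) = 1" if "n \<ge> 1" for n using Lp_fseq[OF p that] .
    show "filterlim (\<lambda>n. SUP x\<in>{-1..1}. \<bar>fseq p n x\<bar>) at_top sequentially"
      by (rule sup_fseq[OF p])
    show "set_integrable lborel {-1..1} (\<lambda>y. \<bar>imgA c (fseq p n) y\<bar> powr p)" for n
      by (rule Af_int[OF assms p fseq_int])
    show "(\<lambda>n. Lp_norm p (imgA c (fseq p n))) \<longlonglongrightarrow> 0"
    proof (rule tendsto_sandwich[where f="\<lambda>_. 0" and h="\<lambda>n. 2 powr (1/p) * (c / pi * (((real n * p + 1) / 2) powr (1 / p) * (2 / (real n + 1))))"])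
      show "\<forall>\<^sub>F n in sequentially. 0 \<le> Lp_norm p (imgA c (fseq p n))"
        by (simp add: Lp_norm_def)
      show "\<forall>\<^sub>F n in sequentially. Lp_norm p (imgA c (fseq p n)) \<le> 2 powr (1/p) * (c / pi * (((real n * p + 1) / 2) powr (1 / p) * (2 / (real n + 1))))"
      proof (rule eventually_sequentiallyI[of 1])
        fix n :: nat assume n: "n \<ge> 1"
        show "Lp_norm p (imgA c (fseq p n)) \<le> 2 powr (1/p) * (c / pi * (((real n * p + 1) / 2) powr (1 / p) * (2 / (real n + 1))))"
          using Lp_A_bound[OF assms p fseq_int, of p n] L1_fseq[OF p n] by simp
      qed
      show "(\<lambda>n. 2 powr (1/p) * (c / pi * (((real n * p + 1) / 2) powr (1 / p) * (2 / (real n + 1))))) \<longlonglongrightarrow> 0"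
        using p assms by real_asymp
    qed simp
  qed
  show ?thesis
    using imgl_pos[OF assms] part1[OF assms] part2 by blast
qed

end
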